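(* Let $\Gamma$ be the semigroup associated to an irreducible plane curve singularity, minimally generated by $r_0<\cdots<r_h$, with $h\ge 2$. Then $r_h\ge \frac13\left(5\cdot 2^{2h-1}-1\right)$.
   Context: A numerical semigroup is a submonoid of $(\mathbb N,+)$ with finite complement in $\mathbb N$; it has a unique minimal generating system. $\langle X\rangle$ is the submonoid generated by $X$. For an arrangement $(r_0,\ldots,r_h)$ of the minimal generators, set $d_k=\gcd(r_0,\ldots,r_{k-1})$ ($k=1,\ldots,h+1$) and $e_k=d_k/d_{k+1}$ ($k=1,\ldots,h$). A set $A$ of positive integers with nontrivial partition $A=A_1\cup A_2$ is the gluing of $A_1$ and $A_2$ if $\mathrm{lcm}(\gcd A_1,\gcd A_2)\in\langle A_1\rangle\cap\langle A_2\rangle$. $\Gamma$ is free for $(r_0,\ldots,r_h)$ if $h=0$, or $h\ge1$, $\{r_0,\ldots,r_h\}$ is the gluing of $\{r_0,\ldots,r_{h-1}\}$ and $\{r_h\}$, and $\langle r_0/d_h,\ldots,r_{h-1}/d_h\rangle$ is free for $(r_0/d_h,\ldots,r_{h-1}/d_h)$. $\Gamma$ is telescopic if it is free for the increasing arrangement $r_0<\cdots<r_h$. $\Gamma$ is the semigroup associated to an irreducible plane curve singularity if it is telescopic and $e_kr_k<r_{k+1}$ for all $k=1,\ldots,h-1$. *)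

theory Defs
  imports Main
begin

inductive_set gen :: "nat set \<Rightarrow> nat set" for X :: "nat set" where
  gen_zero: "0 \<in> gen X"
| gen_base: "x \<in> X \<Longrightarrow> x \<in> gen X"
| gen_add: "a \<in> gen X \<Longrightarrow> b \<in> gen X \<Longrightarrow> a + b \<in> gen X"

definition numerical_semigroup :: "nat set \<Rightarrow> bool" where
  "numerical_semigroup S \<longleftrightarrow> 0 \<in> S \<and> (\<forall>a\<in>S. \<forall>b\<in>S. a + b \<in> S) \<and> finite (UNIV - S)"

definition minimal_generating_system :: "nat set \<Rightarrow> nat set \<Rightarrow> bool" where
  "minimal_generating_system S X \<longleftrightarrow> gen X = S \<and> (\<forall>Y. Y \<subset> X \<longrightarrow> gen Y \<noteq> S)"

definition gluing :: "nat set \<Rightarrow> nat set \<Rightarrow> bool" where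
  "gluing A1 A2 \<longleftrightarrow> A1 \<noteq> {} \<and> A2 \<noteq> {} \<and> A1 \<inter> A2 = {} \<and>
     lcm (Gcd A1) (Gcd A2) \<in> gen A1 \<inter> gen A2"

text \<open>Freeness for an arrangement, on the reversed list (last generator first).\<close>
function freeR :: "nat list \<Rightarrow> bool" where
  "freeR [] = True"
| "freeR [x] = True"
| "freeR (y # x # xs) =
     (gluing (set (x # xs)) {y} \<and>
      freeR (map (\<lambda>z. z div Gcd (set (x # xs))) (x # xs)))"
  by pat_completeness auto
termination by (relation "measure length") auto

definition free_for :: "nat list \<Rightarrow> bool" where
  "free_for rs \<longleftrightarrow> freeR (rev rs)"

definition dseq :: "nat list \<Rightarrow> nat \<Rightarrow> nat" where
  "dseq rs k = Gcd (set (take k rs))"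

definition eseq :: "nat list \<Rightarrow> nat \<Rightarrow> nat" where
  "eseq rs k = dseq rs k div dseq rs (Suc k)"

end

theory Submission
  imports Defs
begin

lemma gen_mono: "X \<subseteq> Y \<Longrightarrow> gen X \<subseteq> gen Y"
proof
  fix m assume a: "X \<subseteq> Y" and m: "m \<in> gen X" from m show "m \<in> gen Y"
    by (induction m rule: gen.induct) (use a in \<open>auto intro: gen.intros\<close>)
qed

lemma gen_sub: "X \<subseteq> gen Y \<Longrightarrow> gen X \<subseteq> gen Y"
proof
  fix m assume a: "X \<subseteq> gen Y" and m: "m \<in> gen X" from m show "m \<in> gen Y"
    by (induction m rule: gen.induct) (use a in \<open>auto intro: gen.intros\<close>)
qed

lemma gen_dvd: "m \<in> gen X \<Longrightarrow> Gcd X dvd m"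
  by (induction m rule: gen.induct) auto

lemma gen_remove0: "gen (X - {0}) = gen X"
proof
  show "gen (X - {0}) \<subseteq> gen X" by (rule gen_mono) auto
  show "gen X \<subseteq> gen (X - {0})"
  proof (rule gen_sub, rule subsetI)
    fix x assume "x \<in> X" then show "x \<in> gen (X - {0})"
      by (cases "x = 0") (auto intro: gen.intros)
  qed
qed

lemma gen_scale:
  assumes "\<forall>a\<in>A. (g::nat) dvd a" "m \<in> gen ((\<lambda>a. a div g) ` A)"
  shows "g * m \<in> gen A"
  using assms(2)
proof (induction m rule: gen.induct)
  case gen_zero then show ?case by (simp add: gen.gen_zero)
next
  case (gen_base x)
  then obtain a where "a \<in> A" "x = a div g" by auto
  then show ?case using assms(1) by (auto intro: gen.gen_base)
next
  case (gen_add a b) then show ?case by (simp add: distrib_left gen.gen_add)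
qed

lemma Gcd_scale:
  assumes "\<forall>a\<in>A. (g::nat) dvd a"
  shows "g * Gcd ((\<lambda>a. a div g) ` A) = Gcd A"
proof -
  have "(*) g ` ((\<lambda>a. a div g) ` A) = A"
    using assms by (force simp: image_image)
  then show ?thesis using Gcd_mult[of g "(\<lambda>a. a div g) ` A"] by simp
qed

lemma L:
  "freeR (rev xs) \<Longrightarrow> \<forall>x\<in>set xs. (0::nat) < x \<Longrightarrow> 1 \<le> k \<Longrightarrow> k < length xs \<Longrightarrow>
   lcm (Gcd (set (take k xs))) (xs!k) \<in> gen (set (take k xs))"
proof (induction "length xs" arbitrary: xs k rule: less_induct)
  case less
  obtain ys y where xs: "xs = ys @ [y]"
    using less.prems(4) by (metis length_0_conv less_zeroE rev_exhaust)
  have "ys \<noteq> []" using less.prems(3,4) xs by auto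
  then obtain x zs where rys: "rev ys = x # zs" by (cases "rev ys") auto
  have sx: "set (x # zs) = set ys" using rys by (metis set_rev)
  define g where "g = Gcd (set ys)"
  have fr: "gluing (set ys) {y}" "freeR (map (\<lambda>z. z div g) (rev ys))"
  proof -
    have "freeR (y # x # zs)" using less.prems(1) unfolding xs by (simp add: rys)
    then have "gluing (set (x # zs)) {y} \<and> freeR (map (\<lambda>z. z div Gcd (set (x # zs))) (x # zs))"
      by (simp only: freeR.simps)
    then show "gluing (set ys) {y}" "freeR (map (\<lambda>z. z div g) (rev ys))"
      unfolding sx g_def rys by auto
  qed
  show ?case
  proof (cases "k = length ys")
    case True
    then have "take k xs = ys" "xs ! k = y" using xs by auto
    then show ?thesis using fr(1) unfolding gluing_def g_def by simp
  next
    case False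
    then have kl: "k < length ys" using less.prems(4) xs by simp
    have tk: "take k xs = take k ys" "xs ! k = ys ! k" using kl xs by (auto simp: nth_append)
    have pos: "\<forall>a\<in>set ys. 0 < a" using less.prems(2) xs by auto
    have gpos: "0 < g" using pos \<open>ys \<noteq> []\<close> unfolding g_def
      by (metis Gcd_0_iff all_not_in_conv gr0I set_empty singletonD subset_singletonD)
    have gd: "\<forall>a\<in>set ys. g dvd a" unfolding g_def by auto
    define ys' where "ys' = map (\<lambda>z. z div g) ys"
    have "freeR (rev ys')" using fr(2) by (simp add: ys'_def rev_map)
    moreover have "\<forall>x\<in>set ys'. 0 < x" unfolding ys'_def
    proof
      fix z assume "z \<in> set (map (\<lambda>z. z div g) ys)"
      then obtain a where a: "a \<in> set ys" "z = a div g" by auto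
      then have "g dvd a" "0 < a" using gd pos by auto
      then show "0 < z" using a gpos by (metis dvd_div_eq_0_iff gr0I less_numeral_extra(3))
    qed
    ultimately have IH: "lcm (Gcd (set (take k ys'))) (ys'!k) \<in> gen (set (take k ys'))"
      using less.hyps[of ys' k] less.prems(3) kl xs by (simp add: ys'_def)
    define T where "T = set (take k ys)"
    have gT: "\<forall>a\<in>T. g dvd a" using gd T_def by (meson in_set_takeD)
    have st: "set (take k ys') = (\<lambda>a. a div g) ` T" unfolding T_def ys'_def by (simp add: take_map)
    have yk: "ys' ! k = ys ! k div g" using kl unfolding ys'_def by simp
    have "g * lcm (Gcd (set (take k ys'))) (ys'!k) \<in> gen T"
      using gen_scale[OF gT] IH st by simp
    moreover have "g * lcm (Gcd (set (take k ys'))) (ys'!k) = lcm (Gcd T) (ys ! k)"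
    proof -
      have "g * Gcd (set (take k ys')) = Gcd T" using Gcd_scale[OF gT] st by simp
      moreover have "g * (ys ! k div g) = ys ! k" using gd kl by simp
      ultimately show ?thesis using yk lcm_mult_left[of g "Gcd (set (take k ys'))" "ys ! k div g"] by simp
    qed
    ultimately show ?thesis using tk T_def by simp
  qed
qed

lemma gap: "(a::nat) dvd b \<Longrightarrow> a dvd c \<Longrightarrow> c < b \<Longrightarrow> c + a \<le> b"
proof -
  assume "a dvd b" "a dvd c" "c < b"
  then have "a dvd b - c" by (simp add: dvd_diff_nat)
  moreover have "0 < b - c" using \<open>c < b\<close> by simp
  ultimately have "a \<le> b - c" by (simp add: dvd_imp_le)
  then show ?thesis using \<open>c < b\<close> by simp
qed

lemma nth_notin_take: "distinct xs \<Longrightarrow> k < length xs \<Longrightarrow> xs ! k \<notin> set (take k xs)"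
proof
  assume d: "distinct xs" and k: "k < length xs" and "xs ! k \<in> set (take k xs)"
  then obtain i where i: "i < length (take k xs)" "take k xs ! i = xs ! k"
    by (metis in_set_conv_nth)
  then have "i < k" "xs ! i = xs ! k" by auto
  then show False using d k nth_eq_iff_index_eq by (metis less_trans nat_neq_iff)
qed

theorem proposition5p1:
  fixes S :: "nat set" and rs :: "nat list" and h :: nat
  assumes "numerical_semigroup S"
    and "minimal_generating_system S (set rs)"
    and "sorted_wrt (<) rs"
    and "length rs = h + 1"
    and "h \<ge> 2"
    and "free_for rs"
    and "\<forall>k. 1 \<le> k \<and> k \<le> h - 1 \<longrightarrow> eseq rs k * rs ! k < rs ! (k + 1)"
  shows "3 * rs ! h + 1 \<ge> 5 * 2 ^ (2 * h - 1)"
proof -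
  define d where "d = dseq rs"
  define r where "r = (\<lambda>i. rs ! i)"
  have genS: "gen (set rs) = S" and minS: "\<forall>Y. Y \<subset> set rs \<longrightarrow> gen Y \<noteq> S"
    using assms(2) unfolding minimal_generating_system_def by auto
  have dist: "distinct rs" using assms(3) strict_sorted_iff by blast
  have pos: "\<forall>x\<in>set rs. 0 < x"
  proof (rule ccontr)
    assume "\<not> (\<forall>x\<in>set rs. 0 < x)"
    then have "0 \<in> set rs" by auto
    then have "set rs - {0} \<subset> set rs" by auto
    moreover have "gen (set rs - {0}) = S" using gen_remove0 genS by simp
    ultimately show False using minS by blast
  qed
  have G1: "Gcd (set rs) = 1"
  proof -
    obtain F where F: "F = UNIV - S" by blast
    have fin: "finite F" using assms(1) F unfolding numerical_semigroup_def by simp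
    define n where "n = Suc (Max (insert 0 F))"
    have "n \<notin> F" "Suc n \<notin> F" unfolding n_def using fin
      by (metis Max_ge Suc_n_not_le_n finite_insert insertCI le_SucI)+
    then have "n \<in> S" "Suc n \<in> S" using F by auto
    then have "Gcd (set rs) dvd n" "Gcd (set rs) dvd Suc n" using gen_dvd genS by auto
    then have "Gcd (set rs) dvd Suc n - n" by (rule dvd_diff_nat[rotated])
    moreover have "Suc n - n = 1" by simp
    ultimately show ?thesis by (metis nat_dvd_1_iff_1)
  qed
  have F3: "\<not> d k dvd r k" if k: "1 \<le> k" "k \<le> h" for k
  proof
    assume dv: "d k dvd r k"
    have kl: "k < length rs" using k assms(4) by simp
    have "lcm (Gcd (set (take k rs))) (rs!k) \<in> gen (set (take k rs))"
      using L assms(6) pos k kl unfolding free_for_def by blast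
    then have rk: "rs ! k \<in> gen (set (take k rs))"
      using dv unfolding d_def r_def dseq_def by (simp add: lcm_proj2_if_dvd)
    define Y where "Y = set rs - {rs ! k}"
    have tY: "set (take k rs) \<subseteq> Y" unfolding Y_def using nth_notin_take[OF dist kl]
      by (auto dest: in_set_takeD)
    have "set rs \<subseteq> gen Y"
    proof
      fix x assume "x \<in> set rs"
      show "x \<in> gen Y"
      proof (cases "x = rs ! k")
        case True then show ?thesis using rk gen_mono[OF tY] by auto
      next
        case False then show ?thesis using \<open>x \<in> set rs\<close> unfolding Y_def by (auto intro: gen.gen_base)
      qed
    qed
    then have "gen Y = S" using gen_sub[of "set rs" Y] gen_mono[of Y "set rs"] genS
      unfolding Y_def by auto
    moreover have "rs ! k \<in> set rs" using kl by simp
    then have "Y \<subset> set rs" unfolding Y_def by blast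
    ultimately show False using minS by blast
  qed
  have F4: "d (Suc k) = gcd (r k) (d k)" if "k < length rs" for k
    using that unfolding d_def r_def dseq_def by (simp add: take_Suc_conv_app_nth)
  have dpos: "0 < d k" if "1 \<le> k" for k
  proof -
    have "take k rs ! 0 = rs ! 0" using that by simp
    moreover have "0 < length (take k rs)" using that assms(4) by simp
    ultimately have "rs ! 0 \<in> set (take k rs)" by (metis nth_mem)
    then have "d k dvd rs ! 0" unfolding d_def dseq_def by simp
    moreover have "rs ! 0 \<in> set rs" using assms(4) by simp
    then have "0 < rs ! 0" using pos by blast
    ultimately show ?thesis by (metis dvd_0_left gr0I less_numeral_extra(3))
  qed
  have F5: "2 * d (Suc k) \<le> d k" if k: "1 \<le> k" "k \<le> h" for k
  proof -
    have kl: "k < length rs" using k assms(4) by simp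
    have a: "d (Suc k) dvd d k" "d (Suc k) dvd r k" using F4[OF kl] by simp_all
    have "d (Suc k) \<noteq> d k" using a(2) F3[OF k] by force
    obtain q where q: "d k = d (Suc k) * q" using a(1) unfolding dvd_def by blast
    have "q \<noteq> 1" using q \<open>d (Suc k) \<noteq> d k\<close> by auto
    moreover have "q \<noteq> 0" using q dpos[OF k(1)] by auto
    ultimately have "2 \<le> q" by simp
    then show ?thesis using q by simp
  qed
  have d1: "d 1 = r 0" unfolding d_def r_def dseq_def using assms(4)
    by (cases rs) auto
  have dh: "d (h+1) = 1" unfolding d_def dseq_def using G1 assms(4) by simp
  have F7: "2 ^ j \<le> d (h + 1 - j)" if "j \<le> h" for j
    using that
  proof (induction j)
    case 0 then show ?case using dh by simp
  next
    case (Suc j)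
    have "2 * d (Suc (h - j)) \<le> d (h - j)" using F5[of "h - j"] Suc.prems by simp
    moreover have "Suc (h - j) = h + 1 - j" "h + 1 - Suc j = h - j" using Suc.prems by auto
    moreover have "2 ^ j \<le> d (h + 1 - j)" using Suc.IH Suc.prems by simp
    ultimately show ?case by simp
  qed
  have F7': "2 ^ (h - k) \<le> d (Suc k)" if "k \<le> h" for k
    using F7[of "h - k"] that by simp
  have sorted: "r i < r j" if "i < j" "j \<le> h" for i j
    using assms(3,4) that unfolding r_def by (simp add: sorted_wrt_iff_nth_less)
  have main: "5 * 2 ^ (h + k - 1) \<le> 3 * r k + 2 ^ (h - k)" if "1 \<le> k" "k \<le> h" for k
    using that
  proof (induction k)
    case 0 then show ?case by simp
  next
    case (Suc k)
    show ?case
    proof (cases "k = 0")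
      case True
      have kl: "0 < length rs" "1 < length rs" using assms(4,5) by auto
      have "d 2 dvd r 1" "d 2 dvd d 1" using F4[OF kl(2)] by (simp_all add: numeral_2_eq_2)
      then have "d 2 dvd r 0" using d1 by simp
      then have "r 0 + d 2 \<le> r 1" using gap \<open>d 2 dvd r 1\<close> sorted[of 0 1] assms(5) by simp
      moreover have "2 * d 2 \<le> r 0" using F5[of 1] assms(5) d1 by (simp add: numeral_2_eq_2)
      moreover have "2 ^ (h - 1) \<le> d 2" using F7'[of 1] assms(5) by (simp add: numeral_2_eq_2)
      moreover have "2 ^ (h + 1 - 1) = 2 * (2::nat) ^ (h - 1)"
      proof -
        have "h + 1 - 1 = Suc (h - 1)" using assms(5) by simp
        then show ?thesis by (simp only: power_Suc)
      qed
      ultimately have "5 * 2 ^ (h + 1 - 1) \<le> 3 * r 1 + 2 ^ (h - 1)" by linarith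
      then show ?thesis using True by simp
    next
      case False
      then have k1: "1 \<le> k" and kh: "Suc k \<le> h" using Suc.prems by auto
      have IH: "5 * 2 ^ (h + k - 1) \<le> 3 * r k + 2 ^ (h - k)" using Suc.IH k1 kh by simp
      have e2: "2 \<le> eseq rs k"
      proof -
        have "2 * d (Suc k) \<le> d k" using F5 k1 kh by simp
        then have "2 * d (Suc k) div d (Suc k) \<le> d k div d (Suc k)" by (rule div_le_mono)
        then show ?thesis using dpos[of "Suc k"] unfolding eseq_def d_def by simp
      qed
      have "eseq rs k * r k < r (Suc k)" using assms(7) k1 kh unfolding r_def by simp
      moreover have "2 * r k \<le> eseq rs k * r k" using e2 by simp
      ultimately have lt: "2 * r k < r (Suc k)" by linarith
      have kl: "Suc k < length rs" using kh assms(4) by simp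
      have "d (Suc (Suc k)) dvd r (Suc k)" "d (Suc (Suc k)) dvd d (Suc k)"
        using F4[OF kl] by simp_all
      moreover have "d (Suc k) dvd r k" using F4[of k] kl by simp
      ultimately have "d (Suc (Suc k)) dvd 2 * r k" "d (Suc (Suc k)) dvd r (Suc k)"
        by (meson dvd_mult dvd_trans)+
      then have "2 * r k + d (Suc (Suc k)) \<le> r (Suc k)" using gap lt by blast
      moreover have "2 ^ (h - Suc k) \<le> d (Suc (Suc k))" using F7'[OF kh] .
      moreover have "2 ^ (h - k) = 2 * (2::nat) ^ (h - Suc k)" 
      proof -
        have "h - k = Suc (h - Suc k)" using kh by simp
        then show ?thesis by (simp only: power_Suc)
      qed
      moreover have "2 ^ (h + Suc k - 1) = 2 * (2::nat) ^ (h + k - 1)" 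
      proof -
        have "h + Suc k - 1 = Suc (h + k - 1)" using k1 by simp
        then show ?thesis by (simp only: power_Suc)
      qed
      ultimately show ?thesis using IH by linarith
    qed
  qed
  have "5 * 2 ^ (h + h - 1) \<le> 3 * r h + 2 ^ (h - h)" using main[of h] assms(5) by simp
  then show ?thesis unfolding r_def by (simp add: mult_2)
qed

end
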